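(* For every $a\in(0,\pi/4)$ one has $\Omega(a)=\Xi(-\beta(a))$, where $\beta(a)\in(0,\pi/2)$ is defined by $\cos^4\beta(a)=4\sin^2a\cos^2a$. In particular $\lim_{a\to0+}\Omega(a)=\frac\pi2$ equals $\lim_{\beta\to\pi/2}\Xi(-\beta)$.
   Context: $\Omega(a)=\sin a\cos a\int_a^{\pi/2-a}\frac{d\nu}{\cos\nu\sqrt{\sin^2\nu\cos^2\nu-\sin^2a\cos^2a}}$ for $a\in(0,\pi/4)$. For $b\in(-\pi/2,0)$, $\Xi(b)=\cos^2b\int_b^{-b}\frac{d\varphi}{\cos\varphi\sqrt{\cos^4\varphi-\cos^4b}}$. ($\Omega(a)$ is the increment of $\lambda$ along half an oscillation of the unit-speed geodesic of $4\pi^2\sin^2\nu(d\nu^2+\cos^2\nu d\lambda^2)$ with minimum $\nu=a$; $\Xi(b)$ is the increment of $\theta$ along half an oscillation of the unit-speed geodesic of $4\pi^2\cos^2\varphi(d\varphi^2+\cos^2\varphi d\theta^2)$ with minimum $\varphi=b$.) *)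

theory Defs
  imports "HOL-Analysis.Analysis"
begin

(* Omega(a) = sin a cos a * int_a^{pi/2-a} dnu / (cos nu sqrt(sin^2 nu cos^2 nu - sin^2 a cos^2 a)),
   an improper (but absolutely convergent) integral, taken as the Henstock-Kurzweil integral
   over the closed interval; the endpoint values are irrelevant (measure zero). *)
definition Omega :: "real \<Rightarrow> real" where
  "Omega a = sin a * cos a *
     integral {a..pi/2 - a}
       (\<lambda>\<nu>. 1 / (cos \<nu> * sqrt ((sin \<nu>)\<^sup>2 * (cos \<nu>)\<^sup>2 - (sin a)\<^sup>2 * (cos a)\<^sup>2)))"

definition Xi :: "real \<Rightarrow> real" where
  "Xi b = (cos b)\<^sup>2 *
     integral {b..-b}
       (\<lambda>\<phi>. 1 / (cos \<phi> * sqrt ((cos \<phi>) ^ 4 - (cos b) ^ 4)))"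

(* beta(a) in (0, pi/2) with cos^4 beta = 4 sin^2 a cos^2 a, i.e. cos^2 beta = 2 sin a cos a *)
definition beta :: "real \<Rightarrow> real" where
  "beta a = arccos (sqrt (2 * sin a * cos a))"

end

theory Submission imports Defs "HOL-Real_Asymp.Real_Asymp" begin

lemma strict_mono_deriv:
  fixes g g' :: "real \<Rightarrow> real"
  assumes pq: "p < q" and cont: "continuous_on {p..q} g"
    and der: "\<And>x. p < x \<Longrightarrow> x < q \<Longrightarrow> (g has_real_derivative g' x) (at x)"
    and pos: "\<And>x. p < x \<Longrightarrow> x < q \<Longrightarrow> g' x > 0"
  shows "\<And>x y. p \<le> x \<Longrightarrow> x < y \<Longrightarrow> y \<le> q \<Longrightarrow> g x < g y"
proof -
  fix x y assume xy: "p \<le> x" "x < y" "y \<le> q"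
  show "g x < g y"
  proof (rule DERIV_pos_imp_increasing_open[OF xy(2)])
    show "\<And>z. x < z \<Longrightarrow> z < y \<Longrightarrow> \<exists>l. DERIV g z :> l \<and> l > 0"
      using der pos xy by (meson le_less_trans less_le_trans)
    show "continuous_on {x..y} g" using xy by (intro continuous_on_subset[OF cont]) auto
  qed
qed

lemma image_open_interval:
  fixes g g' :: "real \<Rightarrow> real"
  assumes pq: "p < q" and cont: "continuous_on {p..q} g"
    and der: "\<And>x. p < x \<Longrightarrow> x < q \<Longrightarrow> (g has_real_derivative g' x) (at x)"
    and pos: "\<And>x. p < x \<Longrightarrow> x < q \<Longrightarrow> g' x > 0"
  shows "g ` {p<..<q} = {g p<..<g q}" "inj_on g {p<..<q}"
proof -
  note sm = strict_mono_deriv[OF assms]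
  show "inj_on g {p<..<q}"
    by (rule inj_onI) (metis greaterThanLessThan_iff less_imp_le linorder_neqE_linordered_idom sm order_less_irrefl)
  show "g ` {p<..<q} = {g p<..<g q}"
  proof
    show "g ` {p<..<q} \<subseteq> {g p<..<g q}" using sm by fastforce
    show "{g p<..<g q} \<subseteq> g ` {p<..<q}"
    proof
      fix y assume y: "y \<in> {g p<..<g q}"
      then obtain x where x: "p \<le> x" "x \<le> q" "g x = y"
        using IVT'[of g p y q, OF _ _ _ cont] pq by auto
      have "x \<noteq> p" "x \<noteq> q" using x y by auto
      with x show "y \<in> g ` {p<..<q}" by force
    qed
  qed
qed

lemma beta_props:
  assumes "0 < a" "a < pi/4"
  shows "0 < beta a" "beta a < pi/2" "cos (beta a) = sqrt (2 * sin a * cos a)"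
     "0 < 2 * sin a * cos a" "2 * sin a * cos a < 1"
proof -
  have u: "2 * sin a * cos a = sin (2*a)" by (simp add: sin_double)
  have "0 < sin (2*a)" using assms by (intro sin_gt_zero) auto
  moreover have "sin (2*a) < 1"
  proof -
    have "sin (2*a) < sin (pi/2)" using assms by (intro sin_monotone_2pi) auto
    thus ?thesis by simp
  qed
  ultimately show u0: "0 < 2 * sin a * cos a" and u1: "2 * sin a * cos a < 1" using u by auto
  let ?y = "sqrt (2 * sin a * cos a)"
  have y: "0 < ?y" "?y < 1" using u0 u1 by auto
  show c: "cos (beta a) = ?y" unfolding beta_def using y by (intro cos_arccos) linarith+
  have b: "0 \<le> beta a" "beta a \<le> pi" unfolding beta_def using arccos_lbound[of ?y] arccos_ubound[of ?y] y by linarith+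
  show "0 < beta a" using b c y by (metis cos_zero less_le order_less_irrefl)
  show "beta a < pi/2"
  proof (rule ccontr)
    assume "\<not> beta a < pi/2"
    then have "0 \<le> cos (pi - beta a)" using b by (intro cos_ge_zero) auto
    then have "cos (beta a) \<le> 0" by simp
    thus False using c y by simp
  qed
qed

definition Fo :: "real \<Rightarrow> real \<Rightarrow> real" where
  "Fo a = (\<lambda>\<nu>. 1 / (cos \<nu> * sqrt ((sin \<nu>)\<^sup>2 * (cos \<nu>)\<^sup>2 - (sin a)\<^sup>2 * (cos a)\<^sup>2)))"

definition AA :: "real \<Rightarrow> real" where "AA a = cos (2*a) / sin (2*a)"
definition kk :: "real \<Rightarrow> real \<Rightarrow> real" where "kk a \<theta> = (arctan (AA a * sin \<theta>) + pi/2) / 2"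
definition kd :: "real \<Rightarrow> real \<Rightarrow> real" where
  "kd a \<theta> = AA a * cos \<theta> / (2 * (1 + (AA a * sin \<theta>)\<^sup>2))"

lemma AA_facts:
  assumes "0 < a" "a < pi/4"
  shows "0 < AA a" "(sin a * cos a)\<^sup>2 * (1 + (AA a)\<^sup>2) = 1/4" "arctan (AA a) = pi/2 - 2*a"
proof -
  have s2: "0 < sin (2*a)" using assms by (intro sin_gt_zero) auto
  have c2: "0 < cos (2*a)" using assms by (intro cos_gt_zero) auto
  show "0 < AA a" unfolding AA_def using s2 c2 by simp
  have "sin (2*a) = 2 * (sin a * cos a)" by (simp add: sin_double)
  hence "(sin a * cos a)\<^sup>2 * (1 + (AA a)\<^sup>2) = (sin (2*a))\<^sup>2/4 * (1 + (cos (2*a))\<^sup>2/(sin (2*a))\<^sup>2)"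
    unfolding AA_def by (simp add: power_divide power_mult_distrib)
  also have "\<dots> = ((sin (2*a))\<^sup>2 + (cos (2*a))\<^sup>2)/4" using s2 by (simp add: field_simps)
  also have "\<dots> = 1/4" by simp
  finally show "(sin a * cos a)\<^sup>2 * (1 + (AA a)\<^sup>2) = 1/4" .
  have "tan (pi/2 - 2*a) = AA a" unfolding AA_def tan_def by (simp add: sin_diff cos_diff)
  moreover have "arctan (tan (pi/2 - 2*a)) = pi/2 - 2*a" using assms by (intro arctan_tan) auto
  ultimately show "arctan (AA a) = pi/2 - 2*a" by simp
qed

lemma kk_pointwise:
  assumes a: "0 < a" "a < pi/4" and th: "-(pi/2) < \<theta>" "\<theta> < pi/2"
  shows "\<bar>kd a \<theta>\<bar> * Fo a (kk a \<theta>) = sin (kk a \<theta>) / (sin a * cos a)"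
proof -
  define s where "s = sin a * cos a"
  define A where "A = AA a"
  define w where "w = A * sin \<theta>"
  define \<mu> where "\<mu> = arctan w"
  define \<nu> where "\<nu> = kk a \<theta>"
  have s0: "0 < s" unfolding s_def using a by (intro mult_pos_pos sin_gt_zero cos_gt_zero) auto
  have A0: "0 < A" and key: "s\<^sup>2 * (1 + A\<^sup>2) = 1/4" using AA_facts[OF a] unfolding A_def s_def by auto
  have ct: "0 < cos \<theta>" using th by (intro cos_gt_zero_pi) auto
  have nu: "\<nu> = (\<mu> + pi/2)/2" unfolding \<nu>_def kk_def \<mu>_def w_def A_def by simp
  have mub: "-(pi/2) < \<mu>" "\<mu> < pi/2" unfolding \<mu>_def using arctan_lbound[of w] arctan_ubound[of w] by linarith+
  have cnu: "0 < cos \<nu>" using mub nu by (intro cos_gt_zero) auto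
  have "2*\<nu> = \<mu> + pi/2" using nu by simp
  hence "sin (2*\<nu>) = cos \<mu>" by (simp add: sin_add)
  hence scm: "sin \<nu> * cos \<nu> = 1 / (2 * sqrt (1 + w\<^sup>2))" unfolding \<mu>_def by (simp add: sin_double cos_arctan)
  have q: "1 + w\<^sup>2 > 0" by (simp add: add_pos_nonneg)
  have "(sin \<nu>)\<^sup>2 * (cos \<nu>)\<^sup>2 - s\<^sup>2 = (sin \<nu> * cos \<nu>)\<^sup>2 - s\<^sup>2" by (simp add: power_mult_distrib)
  also have "\<dots> = 1 / (4 * (1 + w\<^sup>2)) - s\<^sup>2" unfolding scm using q by (simp add: power_divide power_mult_distrib)
  also have "\<dots> = (s * A * cos \<theta>)\<^sup>2 / (1 + w\<^sup>2)"
  proof -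
    have c2: "(cos \<theta>)\<^sup>2 = 1 - (sin \<theta>)\<^sup>2" by (simp add: cos_squared_eq)
    have "4 * s\<^sup>2 * (1 + w\<^sup>2) + 4 * (s * A * cos \<theta>)\<^sup>2 = 4 * (s\<^sup>2 * (1 + A\<^sup>2))"
      unfolding w_def by (simp add: power_mult_distrib c2 algebra_simps)
    also have "\<dots> = 1" using key by simp
    finally have "1 - 4 * s\<^sup>2 * (1 + w\<^sup>2) = 4 * (s * A * cos \<theta>)\<^sup>2" by linarith
    hence e: "1 - 4 * s\<^sup>2 * (1 + w\<^sup>2) = 4 * (s * A * cos \<theta>)\<^sup>2" .
    have "1 / (4 * (1 + w\<^sup>2)) - s\<^sup>2 = (1 - 4 * s\<^sup>2 * (1 + w\<^sup>2)) / (4 * (1 + w\<^sup>2))"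
      using q by (simp add: field_simps)
    also have "\<dots> = (s * A * cos \<theta>)\<^sup>2 / (1 + w\<^sup>2)" unfolding e using q by (simp add: field_simps)
    finally show ?thesis .
  qed
  finally have D: "(sin \<nu>)\<^sup>2 * (cos \<nu>)\<^sup>2 - s\<^sup>2 = (s * A * cos \<theta>)\<^sup>2 / (1 + w\<^sup>2)" .
  have sq: "sqrt ((s * A * cos \<theta>)\<^sup>2 / (1 + w\<^sup>2)) = s * A * cos \<theta> / sqrt (1 + w\<^sup>2)"
    using s0 A0 ct by (simp add: real_sqrt_divide)
  have kd: "\<bar>kd a \<theta>\<bar> = A * cos \<theta> / (2 * (1 + w\<^sup>2))"
    unfolding kd_def A_def[symmetric] w_def[symmetric] using A0 ct q by simp
  have "Fo a \<nu> = sqrt (1 + w\<^sup>2) / (cos \<nu> * (s * A * cos \<theta>))"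
    unfolding Fo_def s_def[symmetric] using D sq by (simp add: power_mult_distrib s_def)
  note Fo1 = this
  define r where "r = sqrt (1 + w\<^sup>2)"
  have r0: "0 < r" "1 + w\<^sup>2 = r\<^sup>2" using q r_def by auto
  have "\<bar>kd a \<theta>\<bar> * Fo a \<nu> = (A * cos \<theta> / (2 * r\<^sup>2)) * (r / (cos \<nu> * (s * A * cos \<theta>)))"
    unfolding kd Fo1 r_def[symmetric] r0(2) using r0(1) by simp
  also have "\<dots> = 1 / (2 * r * cos \<nu> * s)"
    using s0 A0 ct cnu r0 by (simp add: field_simps power2_eq_square)
  also have "\<dots> = 1 / (2 * sqrt (1 + w\<^sup>2) * cos \<nu> * s)" unfolding r_def ..
  also have "\<dots> = sin \<nu> / s" using scm cnu s0 q by (simp add: field_simps)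
  finally show ?thesis unfolding \<nu>_def s_def .
qed


lemma kk_range:
  shows "0 < kk a \<theta>" "kk a \<theta> < pi/2"
  unfolding kk_def using arctan_lbound[of "AA a * sin \<theta>"] arctan_ubound[of "AA a * sin \<theta>"] by auto

lemma kk_sin_nonneg: "0 \<le> sin (kk a \<theta>)"
  using kk_range[of a \<theta>] by (intro sin_ge_zero) auto

lemma aux_arith: "1 + (X::real) \<noteq> 0 \<Longrightarrow> ((inverse (1+X) * (0*y + c*1*A) + 0)*2 - z*0)/(2*2) = A*c/(2*(1+X))"
  by (simp add: field_simps)

lemma kk_deriv: "(kk a has_real_derivative kd a \<theta>) (at \<theta>)"
proof -
  have p: "1 + (AA a * sin \<theta>)\<^sup>2 \<noteq> 0" by (metis add_pos_nonneg zero_less_one zero_le_power2 less_irrefl)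
  show ?thesis unfolding kk_def[abs_def] kd_def
    by (rule derivative_eq_intros refl)+ (simp, rule aux_arith[OF p])
qed

lemma kk_cont: "continuous_on S (kk a)"
  unfolding kk_def[abs_def] by (intro continuous_intros) auto

lemma kk_ends:
  assumes "0 < a" "a < pi/4"
  shows "kk a (-(pi/2)) = a" "kk a (pi/2) = pi/2 - a"
  using AA_facts(3)[OF assms] unfolding kk_def by (simp_all add: arctan_minus)

lemma kd_pos:
  assumes "0 < a" "a < pi/4" "-(pi/2) < \<theta>" "\<theta> < pi/2"
  shows "0 < kd a \<theta>"
  unfolding kd_def using AA_facts(1)[OF assms(1,2)] cos_gt_zero_pi[OF assms(3,4)]
  by (intro divide_pos_pos mult_pos_pos) (auto intro: add_pos_nonneg)

lemma theta_cov:
  assumes a: "0 < a" "a < pi/4"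
  shows "Fo a absolutely_integrable_on {a<..<pi/2-a}"
        "integral {a<..<pi/2-a} (Fo a) = integral {-(pi/2)<..<pi/2} (\<lambda>\<theta>. sin (kk a \<theta>)) / (sin a * cos a)"
proof -
  define s where "s = sin a * cos a"
  have s0: "0 < s" unfolding s_def using a by (intro mult_pos_pos sin_gt_zero cos_gt_zero) auto
  let ?S = "{-(pi/2)<..<pi/2::real}"
  have img: "kk a ` ?S = {a<..<pi/2-a}" "inj_on (kk a) ?S"
    using image_open_interval[of "-(pi/2)" "pi/2" "kk a" "kd a", OF _ kk_cont kk_deriv kd_pos[OF a]]
    kk_ends[OF a] by auto
  have eq: "\<And>\<theta>. \<theta> \<in> ?S \<Longrightarrow> \<bar>kd a \<theta>\<bar> * Fo a (kk a \<theta>) = sin (kk a \<theta>) / s"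
    using kk_pointwise[OF a] unfolding s_def by auto
  have ci: "continuous_on {-(pi/2)..pi/2} (\<lambda>\<theta>. sin (kk a \<theta>) / s)"
    using s0 by (intro continuous_intros kk_cont) auto
  have "(\<lambda>\<theta>. sin (kk a \<theta>) / s) integrable_on ?S"
    using integrable_continuous_interval[OF ci] integrable_on_open_interval_real by blast
  hence "(\<lambda>\<theta>. sin (kk a \<theta>) / s) absolutely_integrable_on ?S"
    by (rule nonnegative_absolutely_integrable_1)
       (use kk_sin_nonneg s0 in \<open>auto\<close>)
  hence L: "(\<lambda>\<theta>. \<bar>kd a \<theta>\<bar> * Fo a (kk a \<theta>)) absolutely_integrable_on ?S"
    using absolutely_integrable_spike_eq[of "{}" ?S "\<lambda>\<theta>. \<bar>kd a \<theta>\<bar> * Fo a (kk a \<theta>)" "\<lambda>\<theta>. sin (kk a \<theta>) / s"] eq by simp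
  have "(\<lambda>\<theta>. \<bar>kd a \<theta>\<bar> * Fo a (kk a \<theta>)) absolutely_integrable_on ?S \<and>
        integral ?S (\<lambda>\<theta>. \<bar>kd a \<theta>\<bar> * Fo a (kk a \<theta>)) = integral ?S (\<lambda>\<theta>. sin (kk a \<theta>) / s)"
  proof (intro conjI L)
    show "integral ?S (\<lambda>\<theta>. \<bar>kd a \<theta>\<bar> * Fo a (kk a \<theta>)) = integral ?S (\<lambda>\<theta>. sin (kk a \<theta>) / s)"
      by (rule integral_cong) (use eq in auto)
  qed
  hence R: "Fo a absolutely_integrable_on (kk a ` ?S) \<and> integral (kk a ` ?S) (Fo a) = integral ?S (\<lambda>\<theta>. sin (kk a \<theta>) / s)"
    by (subst (asm) has_absolute_integral_change_of_variables_1'[where g="kk a" and g'="kd a"])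
       (auto intro: has_field_derivative_at_within kk_deriv img(2))
  show "Fo a absolutely_integrable_on {a<..<pi/2-a}" using R img by simp
  have dv: "integral ?S (\<lambda>\<theta>. sin (kk a \<theta>) / s) = integral ?S (\<lambda>\<theta>. sin (kk a \<theta>)) / s"
    using integral_cmul[of ?S "1/s" "\<lambda>\<theta>. sin (kk a \<theta>)"] by (simp add: field_simps)
  show "integral {a<..<pi/2-a} (Fo a) = integral ?S (\<lambda>\<theta>. sin (kk a \<theta>)) / (sin a * cos a)"
    using R img dv by (simp add: s_def)
qed


definition gg :: "real \<Rightarrow> real" where
  "gg \<nu> = arctan ((sin \<nu> - cos \<nu>) / sqrt (2 * sin \<nu> * cos \<nu>))"
definition gd :: "real \<Rightarrow> real" where
  "gd \<nu> = (sin \<nu> + cos \<nu>) / sqrt (2 * sin \<nu> * cos \<nu>)"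

lemma aux_gg:
  fixes S C r :: real
  assumes r: "0 < r" "r\<^sup>2 = 2 * S * C" and sc: "S\<^sup>2 + C\<^sup>2 = 1"
  shows "inverse (1 + ((S - C) / r)\<^sup>2) * (((C + S) * r - (S - C) * (inverse r / 2 * (2 * (C * C - S * S)))) / (r * r))
         = (S + C) / r"
proof -
  have "1 + ((S - C) / r)\<^sup>2 = (r\<^sup>2 + (S - C)\<^sup>2) / r\<^sup>2" using r(1) by (simp add: field_simps power2_eq_square)
  also have "r\<^sup>2 + (S - C)\<^sup>2 = 1" using r sc by (simp add: power2_eq_square algebra_simps)
  finally have i: "inverse (1 + ((S - C) / r)\<^sup>2) = r\<^sup>2" by simp
  have "((C + S) * r - (S - C) * (inverse r / 2 * (2 * (C * C - S * S)))) = (S + C) * (r\<^sup>2 + (S - C)\<^sup>2) / r"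
    using r(1) by (simp add: field_simps power2_eq_square)
  also have "r\<^sup>2 + (S - C)\<^sup>2 = 1" using r sc by (simp add: power2_eq_square algebra_simps)
  finally have n: "((C + S) * r - (S - C) * (inverse r / 2 * (2 * (C * C - S * S)))) = (S + C) / r" by simp
  show ?thesis unfolding i n using r(1) by (simp add: field_simps power2_eq_square)
qed

lemma gg_deriv:
  assumes "0 < \<nu>" "\<nu> < pi/2"
  shows "(gg has_real_derivative gd \<nu>) (at \<nu>)"
proof -
  have S: "0 < sin \<nu>" using assms by (intro sin_gt_zero) auto
  have C: "0 < cos \<nu>" using assms by (intro cos_gt_zero) auto
  have P: "0 < 2 * sin \<nu> * cos \<nu>" using S C by simp
  define r where "r = sqrt (2 * sin \<nu> * cos \<nu>)"
  have r: "0 < r" "r\<^sup>2 = 2 * sin \<nu> * cos \<nu>" unfolding r_def using P by auto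
  have d1: "((\<lambda>x. 2 * sin x * cos x) has_real_derivative 2 * (cos \<nu> * cos \<nu> - sin \<nu> * sin \<nu>)) (at \<nu>)"
    by (rule derivative_eq_intros refl)+ (simp add: algebra_simps)
  have d2: "((\<lambda>x. sqrt (2 * sin x * cos x)) has_real_derivative inverse r / 2 * (2 * (cos \<nu> * cos \<nu> - sin \<nu> * sin \<nu>))) (at \<nu>)"
    using DERIV_chain2[OF DERIV_real_sqrt[OF P] d1] unfolding r_def by simp
  have d3: "((\<lambda>x. sin x - cos x) has_real_derivative cos \<nu> + sin \<nu>) (at \<nu>)"
    by (rule derivative_eq_intros refl)+ simp
  have d4: "((\<lambda>x. (sin x - cos x) / sqrt (2 * sin x * cos x)) has_real_derivative
      ((cos \<nu> + sin \<nu>) * r - (sin \<nu> - cos \<nu>) * (inverse r / 2 * (2 * (cos \<nu> * cos \<nu> - sin \<nu> * sin \<nu>)))) / (r * r)) (at \<nu>)"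
    using DERIV_divide[OF d3 d2] r S C unfolding r_def by simp
  note d5 = DERIV_chain2[OF DERIV_arctan d4]
  show ?thesis unfolding gg_def[abs_def] gd_def r_def[symmetric]
    using d5 aux_gg[OF r sin_cos_squared_add] unfolding r_def[symmetric] by (simp add: add.commute)
qed


definition GK :: "real \<Rightarrow> real \<Rightarrow> real" where
  "GK K = (\<lambda>\<phi>. 1 / (cos \<phi> * sqrt ((cos \<phi>) ^ 4 - K)))"

lemma gd_pos: "0 < \<nu> \<Longrightarrow> \<nu> < pi/2 \<Longrightarrow> 0 < gd \<nu>"
  unfolding gd_def using sin_gt_zero[of \<nu>] cos_gt_zero[of \<nu>] by simp

lemma gg_cont: "0 < p \<Longrightarrow> q < pi/2 \<Longrightarrow> continuous_on {p..q} gg"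
  unfolding gg_def[abs_def]
proof (intro continuous_intros ballI)
  fix x assume "0 < p" "q < pi/2" "x \<in> {p..q}"
  then have "0 < sin x" "0 < cos x" by (auto intro: sin_gt_zero cos_gt_zero)
  then show "sqrt (2 * sin x * cos x) \<noteq> 0" by simp
qed

lemma sin_lt_cos: "0 < a \<Longrightarrow> a < pi/4 \<Longrightarrow> sin a < cos a"
proof -
  assume a: "0 < a" "a < pi/4"
  have "sin a < sin (pi/2 - a)" using a by (intro sin_monotone_2pi) auto
  thus ?thesis by (simp add: sin_diff)
qed

lemma gg_ends:
  assumes a: "0 < a" "a < pi/4"
  shows "gg a = - beta a" "gg (pi/2 - a) = beta a"
proof -
  define u where "u = 2 * sin a * cos a"
  have u: "0 < u" "u < 1" using beta_props[OF a] unfolding u_def by auto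
  have cb: "cos (beta a) = sqrt u" using beta_props[OF a] unfolding u_def by simp
  have sb: "sin (beta a) = sqrt (1 - u)" unfolding beta_def u_def[symmetric] using u
  proof -
    have "0 \<le> sqrt u" "sqrt u \<le> 1" using u by auto
    thus "sin (arccos (sqrt u)) = sqrt (1 - u)" by (subst sin_arccos; (linarith | use u in simp))
  qed
  have "1 - u = (cos a - sin a)\<^sup>2" unfolding u_def by (simp add: power2_eq_square algebra_simps)
  hence "sqrt (1 - u) = cos a - sin a" using sin_lt_cos[OF a] by simp
  hence tb: "tan (beta a) = (cos a - sin a) / sqrt u" unfolding tan_def cb sb by simp
  have ab: "arctan (tan (beta a)) = beta a" using beta_props(1,2)[OF a] by (intro arctan_tan) auto
  have "gg a = arctan (- ((cos a - sin a) / sqrt u))" unfolding gg_def u_def by (simp add: minus_divide_left)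
  also have "\<dots> = - beta a" unfolding tb[symmetric] arctan_minus ab ..
  finally show "gg a = - beta a" .
  have "gg (pi/2 - a) = arctan ((cos a - sin a) / sqrt u)" unfolding gg_def u_def
    by (simp add: sin_diff cos_diff mult_ac)
  also have "\<dots> = beta a" unfolding tb[symmetric] ab ..
  finally show "gg (pi/2 - a) = beta a" .
qed

lemma pointwise2:
  assumes nu: "0 < \<nu>" "\<nu> < pi/2"
  shows "(Fo a \<nu> + Fo a (pi/2 - \<nu>)) / 2 = \<bar>gd \<nu>\<bar> * (2 * GK (4 * (sin a)\<^sup>2 * (cos a)\<^sup>2) (gg \<nu>))"
proof -
  define S where "S = sin \<nu>"
  define C where "C = cos \<nu>"
  define P where "P = S * C"
  define Q where "Q = sqrt (P\<^sup>2 - (sin a)\<^sup>2 * (cos a)\<^sup>2)"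
  have S0: "0 < S" and C0: "0 < C" unfolding S_def C_def using nu by (auto intro: sin_gt_zero cos_gt_zero)
  have P0: "0 < P" unfolding P_def using S0 C0 by simp
  have sc: "S\<^sup>2 + C\<^sup>2 = 1" unfolding S_def C_def by simp
  define r where "r = sqrt (2 * P)"
  have r: "0 < r" "r\<^sup>2 = 2 * P" unfolding r_def using P0 by auto
  have "1 + ((S - C) / r)\<^sup>2 = (r\<^sup>2 + (S - C)\<^sup>2) / r\<^sup>2" using r(1) by (simp add: field_simps power2_eq_square)
  also have "r\<^sup>2 + (S - C)\<^sup>2 = 1" using r sc unfolding P_def by (simp add: power2_eq_square algebra_simps)
  finally have y: "1 + ((S - C) / r)\<^sup>2 = 1 / r\<^sup>2" .
  have ggr: "gg \<nu> = arctan ((S - C) / r)" by (simp add: gg_def S_def C_def r_def P_def mult.assoc)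
  have cg: "cos (gg \<nu>) = r"
    unfolding ggr cos_arctan y using r(1) by (simp add: real_sqrt_divide)
  have "(cos (gg \<nu>)) ^ 4 - 4 * (sin a)\<^sup>2 * (cos a)\<^sup>2 = 4 * (P\<^sup>2 - (sin a)\<^sup>2 * (cos a)\<^sup>2)"
    unfolding cg using r(2) by (simp add: power4_eq_xxxx power2_eq_square algebra_simps)
  moreover have "sqrt (4::real) = 2" by (rule real_sqrt_unique) auto
  ultimately have sq: "sqrt ((cos (gg \<nu>)) ^ 4 - 4 * (sin a)\<^sup>2 * (cos a)\<^sup>2) = 2 * Q"
    unfolding Q_def by (simp only: real_sqrt_mult)
  have G: "GK (4 * (sin a)\<^sup>2 * (cos a)\<^sup>2) (gg \<nu>) = 1 / (r * (2 * Q))"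
    unfolding GK_def by (simp only: sq) (simp only: cg)
  have gd: "\<bar>gd \<nu>\<bar> = (S + C) / r" using S0 C0 r(1)
    by (simp add: gd_def S_def C_def r_def P_def mult.assoc)
  have F1: "Fo a \<nu> = 1 / (C * Q)" unfolding Fo_def Q_def P_def S_def C_def by (simp add: power_mult_distrib)
  have F2: "Fo a (pi/2 - \<nu>) = 1 / (S * Q)" unfolding Fo_def Q_def P_def S_def C_def
    by (simp add: power_mult_distrib sin_diff cos_diff mult.commute)
  show ?thesis
  proof (cases "Q = 0")
    case True thus ?thesis unfolding F1 F2 G gd by simp
  next
    case False
    thus ?thesis unfolding F1 F2 G gd using S0 C0 r unfolding P_def
      by (simp add: field_simps power2_eq_square)
  qed
qed


lemma div_as_scale: "(\<lambda>x. f x / (c::real)) = (\<lambda>x. inverse c *\<^sub>R f x)"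
  by (rule ext) (simp add: divide_inverse mult.commute)

lemma integral_div_real: "integral S (\<lambda>x. f x / (c::real)) = integral S f / c"
  unfolding div_as_scale integral_cmul by (simp add: divide_inverse mult.commute)

lemma integrable_div_real: "f integrable_on S \<Longrightarrow> (\<lambda>x. f x / (c::real)) integrable_on S"
  unfolding div_as_scale by (rule integrable_cmul)

lemma main_eq:
  assumes a: "0 < a" "a < pi/4"
  shows "Omega a = Xi (- beta a)"
        "Omega a = integral {-(pi/2)<..<pi/2} (\<lambda>\<theta>. sin (kk a \<theta>))"
proof -
  define s where "s = sin a * cos a"
  have s0: "0 < s" unfolding s_def using a by (intro mult_pos_pos sin_gt_zero cos_gt_zero) auto
  define T where "T = {a<..<pi/2-a}"
  define I where "I = integral T (Fo a)"
  have FT: "Fo a absolutely_integrable_on T" and IT: "I = integral {-(pi/2)<..<pi/2} (\<lambda>\<theta>. sin (kk a \<theta>)) / s"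
    using theta_cov[OF a] unfolding T_def I_def s_def by auto
  have Om: "Omega a = s * I"
    unfolding Omega_def I_def T_def s_def integral_open_interval_real[symmetric] Fo_def ..
  show "Omega a = integral {-(pi/2)<..<pi/2} (\<lambda>\<theta>. sin (kk a \<theta>))" unfolding Om IT using s0 by simp
  have Tl: "T \<in> sets lebesgue" unfolding T_def by simp
  have rimg: "(\<lambda>\<nu>. pi/2 - \<nu>) ` T = T" unfolding T_def
    by (auto simp: image_iff intro!: bexI[where x="pi/2 - x" for x])
  have "(\<lambda>x. \<bar>-1\<bar> * Fo a (pi/2 - x)) absolutely_integrable_on T \<and> integral T (\<lambda>x. \<bar>-1\<bar> * Fo a (pi/2 - x)) = I"
    by (subst has_absolute_integral_change_of_variables_1'[where g="\<lambda>\<nu>. pi/2 - \<nu>" and g'="\<lambda>_. -1"])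
       (auto simp: Tl rimg FT I_def inj_on_def intro!: derivative_eq_intros)
  hence RT: "(\<lambda>x. Fo a (pi/2 - x)) absolutely_integrable_on T" "integral T (\<lambda>x. Fo a (pi/2 - x)) = I" by auto
  define H where "H = (\<lambda>\<nu>. (Fo a \<nu> + Fo a (pi/2 - \<nu>)) / 2)"
  have Hi: "H integrable_on T" unfolding H_def
    using FT RT(1) unfolding absolutely_integrable_on_def by (intro integrable_div_real integrable_add) auto
  have HI: "integral T H = I" unfolding H_def integral_div_real
    using FT RT unfolding absolutely_integrable_on_def by (simp add: integral_add I_def)
  have Ta: "\<And>\<nu>. \<nu> \<in> T \<Longrightarrow> 0 < \<nu> \<and> \<nu> < pi/2" unfolding T_def using a by auto
  have eqn: "H = (\<lambda>\<nu>. (1/2) *\<^sub>R (Fo a \<nu> + Fo a (pi/2 - \<nu>)))" unfolding H_def by auto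
  have Ha: "H absolutely_integrable_on T" unfolding eqn
    by (intro absolutely_integrable_scaleR_left set_integral_add FT RT(1))
  define K where "K = 4 * (sin a)\<^sup>2 * (cos a)\<^sup>2"
  have eqH: "\<bar>gd \<nu>\<bar> * (2 * GK K (gg \<nu>)) = H \<nu>" if "\<nu> \<in> T" for \<nu>
    unfolding H_def K_def using pointwise2[of \<nu> a] Ta[OF that] by simp
  have L: "(\<lambda>\<nu>. \<bar>gd \<nu>\<bar> * (2 * GK K (gg \<nu>))) absolutely_integrable_on T \<and>
           integral T (\<lambda>\<nu>. \<bar>gd \<nu>\<bar> * (2 * GK K (gg \<nu>))) = I"
  proof
    show "(\<lambda>\<nu>. \<bar>gd \<nu>\<bar> * (2 * GK K (gg \<nu>))) absolutely_integrable_on T"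
      using absolutely_integrable_spike_eq[of "{}" T H] eqH Ha by simp
    show "integral T (\<lambda>\<nu>. \<bar>gd \<nu>\<bar> * (2 * GK K (gg \<nu>))) = I"
      using integral_cong[of T "\<lambda>\<nu>. \<bar>gd \<nu>\<bar> * (2 * GK K (gg \<nu>))" H] eqH HI by simp
  qed
  have pq: "a < pi/2 - a" using a by simp
  have gc: "continuous_on {a..pi/2-a} gg" by (rule gg_cont) (use a in auto)
  have gdr: "\<And>x. a < x \<Longrightarrow> x < pi/2-a \<Longrightarrow> (gg has_real_derivative gd x) (at x)"
    by (rule gg_deriv) (use a in auto)
  have gp: "\<And>x. a < x \<Longrightarrow> x < pi/2-a \<Longrightarrow> 0 < gd x"
    by (rule gd_pos) (use a in auto)
  note io = image_open_interval[OF pq gc gdr gp]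
  have gimg: "gg ` T = {-beta a<..<beta a}" "inj_on gg T"
  proof -
    have "gg ` T = {gg a<..<gg (pi/2-a)}" using io(1) unfolding T_def .
    thus "gg ` T = {-beta a<..<beta a}" unfolding gg_ends[OF a] .
    show "inj_on gg T" using io(2) unfolding T_def .
  qed
  have dT: "\<And>x. x \<in> T \<Longrightarrow> (gg has_field_derivative gd x) (at x within T)"
  proof -
    fix x assume "x \<in> T"
    hence "a < x" "x < pi/2-a" by (simp_all add: T_def)
    thus "(gg has_field_derivative gd x) (at x within T)" by (rule has_field_derivative_at_within[OF gdr])
  qed
  have "(\<lambda>\<phi>. 2 * GK K \<phi>) absolutely_integrable_on gg ` T \<and> integral (gg ` T) (\<lambda>\<phi>. 2 * GK K \<phi>) = I"
    using has_absolute_integral_change_of_variables_1'[OF Tl dT gimg(2), of "\<lambda>\<phi>. 2 * GK K \<phi>" I] L by simp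
  hence "integral {-beta a<..<beta a} (\<lambda>\<phi>. 2 * GK K \<phi>) = I" unfolding gimg by simp
  moreover have "integral {-beta a<..<beta a} (\<lambda>\<phi>. 2 * GK K \<phi>) = 2 * integral {-beta a..beta a} (GK K)"
    using integral_cmul[of "{-beta a<..<beta a}" 2 "GK K"] unfolding integral_open_interval_real[symmetric] by simp
  ultimately have GI: "integral {-beta a..beta a} (GK K) = I / 2" by simp
  have cb: "cos (- beta a) = sqrt (2 * s)" using beta_props(3)[OF a] unfolding s_def by (simp add: mult.assoc)
  have c2: "(cos (- beta a))\<^sup>2 = 2 * s" unfolding cb using s0 by simp
  have c4: "(cos (- beta a)) ^ 4 = K" unfolding K_def cb using s0
    by (simp add: power4_eq_xxxx s_def power2_eq_square mult_ac)
  have X: "Xi (- beta a) = 2 * s * integral {-beta a..beta a} (GK K)"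
    unfolding Xi_def c2 c4 GK_def by simp
  have "2 * s * integral {-beta a..beta a} (GK K) = s * I" unfolding GI by simp
  thus "Omega a = Xi (- beta a)" unfolding X Om by (rule sym)
qed


lemma AA_at_top: "filterlim AA at_top (at_right 0)"
  unfolding AA_def[abs_def] by real_asymp

lemma kk_lim_pos:
  assumes S: "filterlim S (at_right 0) sequentially" and th: "0 < \<theta>" "\<theta> < pi"
  shows "(\<lambda>n. sin (kk (S n) \<theta>)) \<longlonglongrightarrow> 1"
proof -
  have "filterlim (\<lambda>n. AA (S n)) at_top sequentially" by (rule filterlim_compose[OF AA_at_top S])
  hence "filterlim (\<lambda>n. sin \<theta> * AA (S n)) at_top sequentially"
    using sin_gt_zero[OF th] by (intro filterlim_tendsto_pos_mult_at_top) auto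
  hence "filterlim (\<lambda>n. AA (S n) * sin \<theta>) at_top sequentially" by (simp add: mult.commute)
  hence "(\<lambda>n. arctan (AA (S n) * sin \<theta>)) \<longlonglongrightarrow> pi/2"
    by (rule filterlim_compose[OF tendsto_arctan_at_top])
  hence "(\<lambda>n. sin ((arctan (AA (S n) * sin \<theta>) + pi/2)/2)) \<longlonglongrightarrow> sin ((pi/2 + pi/2)/2)"
    by (intro tendsto_intros) auto
  thus ?thesis unfolding kk_def by simp
qed

lemma kk_lim_neg:
  assumes S: "filterlim S (at_right 0) sequentially" and th: "-pi < \<theta>" "\<theta> < 0"
  shows "(\<lambda>n. sin (kk (S n) \<theta>)) \<longlonglongrightarrow> 0"
proof -
  have "filterlim (\<lambda>n. AA (S n)) at_top sequentially" by (rule filterlim_compose[OF AA_at_top S])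
  moreover have "sin \<theta> < 0" using sin_gt_zero[of "-\<theta>"] th by simp
  ultimately have "filterlim (\<lambda>n. sin \<theta> * AA (S n)) at_bot sequentially"
    by (intro filterlim_tendsto_neg_mult_at_bot) auto
  hence "filterlim (\<lambda>n. AA (S n) * sin \<theta>) at_bot sequentially" by (simp add: mult.commute)
  hence "(\<lambda>n. arctan (AA (S n) * sin \<theta>)) \<longlonglongrightarrow> -(pi/2)"
    by (rule filterlim_compose[OF tendsto_arctan_at_bot])
  hence "(\<lambda>n. sin ((arctan (AA (S n) * sin \<theta>) + pi/2)/2)) \<longlonglongrightarrow> sin ((-(pi/2) + pi/2)/2)"
    by (intro tendsto_intros) auto
  thus ?thesis unfolding kk_def by simp
qed

lemma kk_int: "(\<lambda>\<theta>. sin (kk a \<theta>)) integrable_on {p..q}"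
  by (intro integrable_continuous_interval continuous_intros kk_cont)

lemma Omega_split:
  assumes a: "0 < a" "a < pi/4"
  shows "Omega a = integral {-(pi/2)<..<0} (\<lambda>\<theta>. sin (kk a \<theta>)) + integral {0<..<pi/2} (\<lambda>\<theta>. sin (kk a \<theta>))"
  unfolding main_eq(2)[OF a] integral_open_interval_real[symmetric]
  using Henstock_Kurzweil_Integration.integral_combine[where a="-(pi/2)" and c=0 and b="pi/2" and f="\<lambda>\<theta>. sin (kk a \<theta>)"] kk_int by simp

lemma Omega_lim: "(Omega \<longlongrightarrow> pi/2) (at_right 0)"
proof (rule tendsto_at_right_sequentially[of 0 "pi/4"])
  show "0 < pi/4" by simp
  fix S :: "nat \<Rightarrow> real"
  assume S0: "\<And>n. 0 < S n" and S1: "\<And>n. S n < pi/4" and "decseq S" and Sl: "S \<longlonglongrightarrow> 0"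
  have Sf: "filterlim S (at_right 0) sequentially"
    using S0 by (intro tendsto_imp_filterlim_at_right[OF Sl]) auto
  let ?f = "\<lambda>n \<theta>. sin (kk (S n) \<theta>)"
  have bnd: "norm (?f n \<theta>) \<le> 1" for n \<theta> by simp
  have P: "(\<lambda>n. integral {0<..<pi/2} (?f n)) \<longlonglongrightarrow> integral {0<..<pi/2} (\<lambda>_. 1::real)"
  proof (rule dominated_convergence(2))
    show "\<And>n. ?f n integrable_on {0<..<pi/2}" using kk_int integrable_on_open_interval_real by blast
    show "(\<lambda>_. 1::real) integrable_on {0<..<pi/2}" using integrable_on_open_interval_real by auto
    show "\<And>n x. x \<in> {0<..<pi/2} \<Longrightarrow> norm (?f n x) \<le> 1" by (rule bnd)
    show "\<And>x. x \<in> {0<..<pi/2} \<Longrightarrow> (\<lambda>n. ?f n x) \<longlonglongrightarrow> 1" by (rule kk_lim_pos[OF Sf]) auto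
  qed
  have N: "(\<lambda>n. integral {-(pi/2)<..<0} (?f n)) \<longlonglongrightarrow> integral {-(pi/2)<..<0} (\<lambda>_. 0::real)"
  proof (rule dominated_convergence(2))
    show "\<And>n. ?f n integrable_on {-(pi/2)<..<0}" using kk_int integrable_on_open_interval_real by blast
    show "(\<lambda>_. 1::real) integrable_on {-(pi/2)<..<0}" using integrable_on_open_interval_real by auto
    show "\<And>n x. x \<in> {-(pi/2)<..<0} \<Longrightarrow> norm (?f n x) \<le> 1" by (rule bnd)
    show "\<And>x. x \<in> {-(pi/2)<..<0} \<Longrightarrow> (\<lambda>n. ?f n x) \<longlonglongrightarrow> 0" by (rule kk_lim_neg[OF Sf]) auto
  qed
  have I1: "integral {0<..<pi/2} (\<lambda>_. 1::real) = pi/2"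
    unfolding integral_open_interval_real[symmetric] by simp
  have I0: "integral {-(pi/2)<..<0} (\<lambda>_. 0::real) = 0" by simp
  have "(\<lambda>n. integral {-(pi/2)<..<0} (?f n) + integral {0<..<pi/2} (?f n)) \<longlonglongrightarrow> 0 + pi/2"
    using tendsto_add[OF N P] unfolding I1 I0 .
  moreover have "(\<lambda>n. Omega (S n)) = (\<lambda>n. integral {-(pi/2)<..<0} (?f n) + integral {0<..<pi/2} (?f n))"
    using Omega_split S0 S1 by auto
  ultimately show "(\<lambda>n. Omega (S n)) \<longlonglongrightarrow> pi/2" by simp
qed


definition ainv :: "real \<Rightarrow> real" where "ainv b = arcsin ((cos b)\<^sup>2) / 2"

lemma ainv_props:
  assumes b: "0 < b" "b < pi/2"
  shows "0 < ainv b" "ainv b < pi/4" "beta (ainv b) = b"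
proof -
  define u where "u = (cos b)\<^sup>2"
  have cb: "0 < cos b" using b by (intro cos_gt_zero) auto
  have "cos b < 1"
  proof -
    have "cos b < cos 0" using b by (intro cos_monotone_0_pi) auto
    thus ?thesis by simp
  qed
  hence u: "0 < u" "u < 1" unfolding u_def using cb by (auto simp: power_less_one_iff)
  have "arcsin 0 < arcsin u" using u by (intro arcsin_less_arcsin) auto
  thus "0 < ainv b" unfolding ainv_def u_def[symmetric] by simp
  have "arcsin u < arcsin 1" using u by (intro arcsin_less_arcsin) auto
  thus "ainv b < pi/4" unfolding ainv_def u_def[symmetric] by simp
  have "2 * sin (ainv b) * cos (ainv b) = sin (2 * ainv b)" by (simp add: sin_double)
  also have "\<dots> = u" unfolding ainv_def u_def[symmetric] using u by simp
  finally have "sqrt (2 * sin (ainv b) * cos (ainv b)) = cos b" unfolding u_def using cb by simp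
  thus "beta (ainv b) = b" unfolding beta_def using b by (simp add: arccos_cos)
qed

lemma Xi_lim: "((\<lambda>b. Xi (- b)) \<longlongrightarrow> pi/2) (at_left (pi/2))"
proof -
  have ev: "eventually (\<lambda>b. b \<in> {0<..<pi/2}) (at_left (pi/2))"
    by (rule eventually_at_left_real) simp
  have "(ainv \<longlongrightarrow> arcsin ((cos (pi/2))\<^sup>2) / 2) (at_left (pi/2))"
    unfolding ainv_def[abs_def]
    by (intro tendsto_intros isCont_tendsto_compose[OF isCont_arcsin]) auto
  hence l: "(ainv \<longlongrightarrow> 0) (at_left (pi/2))" by simp
  have "filterlim ainv (at_right 0) (at_left (pi/2))"
    by (rule tendsto_imp_filterlim_at_right[OF l]) (use ev ainv_props in \<open>auto elim: eventually_mono\<close>)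
  hence lim: "((\<lambda>b. Omega (ainv b)) \<longlongrightarrow> pi/2) (at_left (pi/2))"
    by (rule filterlim_compose[OF Omega_lim])
  have e2: "eventually (\<lambda>b. Omega (ainv b) = Xi (- b)) (at_left (pi/2))"
    using ev by eventually_elim (use main_eq(1) ainv_props in auto)
  show ?thesis using iffD1[OF tendsto_cong[OF e2] lim] .
qed

theorem mainTheorem4:
  shows "(\<forall>a. 0 < a \<and> a < pi/4 \<longrightarrow>
            0 < beta a \<and> beta a < pi/2 \<and>
            (cos (beta a)) ^ 4 = 4 * (sin a)\<^sup>2 * (cos a)\<^sup>2 \<and>
            Omega a = Xi (- beta a))
         \<and> (Omega \<longlongrightarrow> pi/2) (at_right 0)
         \<and> ((\<lambda>b. Xi (- b)) \<longlongrightarrow> pi/2) (at_left (pi/2))"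
proof (intro conjI allI impI Omega_lim Xi_lim)
  fix a :: real assume a: "0 < a \<and> a < pi/4"
  hence a1: "0 < a" "a < pi/4" by auto
  show "0 < beta a" "beta a < pi/2" using beta_props[OF a1] by auto
  show "Omega a = Xi (- beta a)" by (rule main_eq(1)[OF a1])
  have "0 < 2 * sin a * cos a" using beta_props[OF a1] by auto
  thus "(cos (beta a)) ^ 4 = 4 * (sin a)\<^sup>2 * (cos a)\<^sup>2" using beta_props(3)[OF a1]
    by (simp add: power4_eq_xxxx power2_eq_square mult_ac)
qed

end
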